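(* Let $n=2m+1\ge 3$ be odd, let $\theta$ be a generator of $\mathrm{Gal}(\mathbb{F}_{2^n}/\mathbb{F}_2)$, and let $G=A(n,\theta)$. Let $C\subseteq G$ be a union of conjugacy classes of elements of order $4$, obtained by choosing, for each pair $\{K,K^{(-1)}\}$ consisting of a conjugacy class $K$ of elements of order $4$ and its inverse class $K^{(-1)}=\{k^{-1}:k\in K\}$, exactly one of $K$ and $K^{(-1)}$. (In $G$ no class of elements of order $4$ equals its inverse class, so $C\cap C^{(-1)}=\emptyset$ and $C$ consists of exactly half of the conjugacy classes of elements of order 4.) Then the continuous-time quantum walk on the oriented Cayley graph $\mathrm{Cay}(G,C)$ has uniform mixing at time $\tau=\pi/2^{n+1}$, i.e. all entries of $e^{\tau S}$ have the same absolute value, where $S$ is the skew adjacency matrix of $\mathrm{Cay}(G,C)$.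
   Context: Let $\mathbb{F}_{2^n}$ be the field with $2^n$ elements and write $a^\theta$ for the image of $a$ under the field automorphism $\theta$. $A(n,\theta)$ is the group (under matrix multiplication) of $3\times 3$ matrices $\begin{bmatrix}1&a&b\\0&1&a^\theta\\0&0&1\end{bmatrix}$ with $a,b\in\mathbb{F}_{2^n}$; writing $(a,b)$ for this matrix, $(a,b)(c,d)=(a+c,\,b+d+ac^\theta)$. For a finite group $G$ and a subset $C\subseteq G$ with $1\notin C$, the Cayley digraph $\mathrm{Cay}(G,C)$ has vertex set $G$ and an arc from $g$ to $cg$ for every $g\in G$, $c\in C$; it is oriented when $C\cap C^{(-1)}=\emptyset$, where $C^{(-1)}=\{c^{-1}:c\in C\}$. For an oriented graph, the skew adjacency matrix $S$ is indexed by vertices, with $(u,v)$ entry $1$ if $(u,v)$ is an arc, $-1$ if $(v,u)$ is an arc, and $0$ otherwise. The quantum walk has transition matrices $U(t)=e^{tS}$, and it has uniform mixing at time $\tau$ if all entries of $U(\tau)$ have the same absolute value. *)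

theory Defs
  imports Complex_Main
begin

definition Amul :: "('a::field \<Rightarrow> 'a) \<Rightarrow> 'a \<times> 'a \<Rightarrow> 'a \<times> 'a \<Rightarrow> 'a \<times> 'a" where
  "Amul \<theta> x y = (fst x + fst y, snd x + snd y + fst x * \<theta> (fst y))"

definition Aone :: "'a::field \<times> 'a" where
  "Aone = (0, 0)"

definition Ainv :: "('a::field \<Rightarrow> 'a) \<Rightarrow> 'a \<times> 'a \<Rightarrow> 'a \<times> 'a" where
  "Ainv \<theta> x = (- fst x, fst x * \<theta> (fst x) - snd x)"

fun Apow :: "('a::field \<Rightarrow> 'a) \<Rightarrow> 'a \<times> 'a \<Rightarrow> nat \<Rightarrow> 'a \<times> 'a" where
  "Apow \<theta> g 0 = Aone"
| "Apow \<theta> g (Suc k) = Amul \<theta> (Apow \<theta> g k) g"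

definition Aord :: "('a::field \<Rightarrow> 'a) \<Rightarrow> 'a \<times> 'a \<Rightarrow> nat" where
  "Aord \<theta> g = (LEAST k. 0 < k \<and> Apow \<theta> g k = Aone)"

definition Aconjcl :: "('a::field \<Rightarrow> 'a) \<Rightarrow> 'a \<times> 'a \<Rightarrow> ('a \<times> 'a) set" where
  "Aconjcl \<theta> g = {Amul \<theta> (Amul \<theta> x g) (Ainv \<theta> x) | x. True}"

definition Aclasses4 :: "('a::field \<Rightarrow> 'a) \<Rightarrow> ('a \<times> 'a) set set" where
  "Aclasses4 \<theta> = {Aconjcl \<theta> g | g. Aord \<theta> g = 4}"

definition skew_adj :: "('g \<Rightarrow> 'g \<Rightarrow> 'g) \<Rightarrow> 'g set \<Rightarrow> 'g \<Rightarrow> 'g \<Rightarrow> real" where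
  "skew_adj mul C u v =
     (if \<exists>c\<in>C. v = mul c u then 1 else if \<exists>c\<in>C. u = mul c v then -1 else 0)"

fun mat_pow :: "('i::finite \<Rightarrow> 'i \<Rightarrow> real) \<Rightarrow> nat \<Rightarrow> 'i \<Rightarrow> 'i \<Rightarrow> real" where
  "mat_pow M 0 = (\<lambda>u v. if u = v then 1 else 0)"
| "mat_pow M (Suc k) = (\<lambda>u v. \<Sum>w\<in>UNIV. mat_pow M k u w * M w v)"

definition mat_exp :: "('i::finite \<Rightarrow> 'i \<Rightarrow> real) \<Rightarrow> 'i \<Rightarrow> 'i \<Rightarrow> real" where
  "mat_exp M = (\<lambda>u v. \<Sum>k. mat_pow M k u v / fact k)"

definition uniform_mixing :: "('i::finite \<Rightarrow> 'i \<Rightarrow> real) \<Rightarrow> bool" where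
  "uniform_mixing U \<longleftrightarrow> (\<exists>c. \<forall>u v. \<bar>U u v\<bar> = c)"

end

theory Submission
  imports Defs "HOL-Algebra.Multiplicative_Group" "HOL-Computational_Algebra.Polynomial"
begin
hide_const (open) Multiset.mult

lemma field_class_ring: "field \<lparr>carrier = UNIV, mult = (*), one = (1::'a::field), zero = 0, add = (+)\<rparr>"
  (is "field ?R")
proof -
  have cr: "cring ?R"
    by (unfold_locales) (auto simp: field_simps Units_def intro: exI[of _ "- _"])
  show ?thesis
  proof (rule cring.cring_fieldI[OF cr])
    show "Units ?R = carrier ?R - {\<zero>\<^bsub>?R\<^esub>}"
    proof (auto simp: Units_def)
      fix x :: 'a assume "x \<noteq> 0"
      thus "\<exists>y. y * x = 1 \<and> x * y = 1" by (intro exI[of _ "inverse x"]) auto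
    qed
  qed
qed

lemma gen_exists:
  fixes dummy :: "'a::{field,finite}"
  shows "\<exists>g::'a. g \<noteq> 0 \<and> (\<forall>x. x \<noteq> 0 \<longrightarrow> (\<exists>i::nat. x = g ^ i))"
proof -
  let ?R = "\<lparr>carrier = (UNIV::'a set), mult = ((*)::'a\<Rightarrow>'a\<Rightarrow>'a), one = (1::'a), zero = (0::'a), add = ((+)::'a\<Rightarrow>'a\<Rightarrow>'a)\<rparr>"
  have fin0: "finite (UNIV :: 'a set)" by (rule finite_UNIV)
  interpret field ?R by (rule field_class_ring)
  have pw: "x [^]\<^bsub>?R\<^esub> (i::nat) = x ^ i" for x :: 'a and i
    by (induct i) (auto simp: mult.commute)
  have fin: "finite (carrier ?R)" using fin0 by simp
  obtain a where a: "a \<in> carrier (mult_of ?R)" and c: "carrier (mult_of ?R) = {a[^]\<^bsub>?R\<^esub>i | i::nat . i \<in> UNIV}"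
    using finite_field_mult_group_has_gen[OF fin] by blast
  have a0: "a \<noteq> 0" using a by simp
  have "\<forall>x. x \<noteq> 0 \<longrightarrow> (\<exists>i::nat. x = a ^ i)"
  proof (intro allI impI)
    fix x :: 'a assume "x \<noteq> 0"
    hence "x \<in> carrier (mult_of ?R)" by simp
    hence "x \<in> {a[^]\<^bsub>?R\<^esub>i | i::nat . i \<in> UNIV}" unfolding c .
    then obtain i :: nat where "x = a[^]\<^bsub>?R\<^esub>i" by blast
    thus "\<exists>i::nat. x = a ^ i" by (auto simp: pw)
  qed
  with a0 show ?thesis by blast
qed


lemma hom_sum:
  assumes add: "\<And>x y. \<sigma> (x + y) = \<sigma> x + \<sigma> y" and z: "\<sigma> 0 = (0::'a::comm_monoid_add)"
  shows "\<sigma> (\<Sum>i\<in>D. f i) = (\<Sum>i\<in>D. \<sigma> (f i))"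
  by (induct D rule: infinite_finite_induct) (auto simp: add z)

lemma hom_pow:
  assumes mul: "\<And>x y. \<sigma> (x * y) = \<sigma> x * \<sigma> y" and o: "\<sigma> 1 = (1::'a::monoid_mult)"
  shows "\<sigma> (x ^ i) = (\<sigma> x) ^ i"
  by (induct i) (auto simp: mul o)

locale aut =
  fixes \<theta> :: "'a::{field,finite} \<Rightarrow> 'a" and n :: nat
  assumes card_F: "card (UNIV :: 'a set) = 2 ^ n"
    and char2: "(1::'a) + 1 = 0"
    and aut_bij: "bij \<theta>"
    and aut_add: "\<And>x y. \<theta> (x + y) = \<theta> x + \<theta> y"
    and aut_mult: "\<And>x y. \<theta> (x * y) = \<theta> x * \<theta> y"
    and gen_n: "\<theta> ^^ n = id"
    and gen_min: "\<And>k. 0 < k \<Longrightarrow> k < n \<Longrightarrow> \<theta> ^^ k \<noteq> id"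
begin

lemma two_0[simp]: "(2::'a) = 0" by (metis char2 one_add_one)

lemma two[simp]: "x + x = (0::'a)"
  by (metis mult_2 two_0 mult_zero_left)

lemma two_l[simp]: "x + (x + y) = (y::'a)" by (simp add: add.assoc[symmetric])
lemma two_r[simp]: "x + y + y = (x::'a)" by (simp add: add.assoc)

lemma neg[simp]: "- x = (x::'a)"
  by (metis add_left_cancel minus_add_cancel two add.commute add.assoc add_0_right)

lemma minus_eq[simp]: "x - y = x + (y::'a)"
  by (metis diff_conv_add_uminus neg)

lemma th0[simp]: "\<theta> 0 = 0"
  using aut_add[of 0 0] by simp

lemma th_inj: "inj \<theta>" using aut_bij bij_is_inj by blast

lemma th1[simp]: "\<theta> 1 = 1"
proof -
  have "\<theta> 1 = \<theta> 1 * \<theta> 1" using aut_mult[of 1 1] by simp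
  moreover have "\<theta> 1 \<noteq> 0" using th_inj th0 by (metis injD one_neq_zero)
  ultimately show ?thesis by (metis mult_cancel_left1)
qed

lemma thi_add: "(\<theta>^^i) (x + y) = (\<theta>^^i) x + (\<theta>^^i) y"
  by (induct i) (auto simp: aut_add)
lemma thi_mult: "(\<theta>^^i) (x * y) = (\<theta>^^i) x * (\<theta>^^i) y"
  by (induct i) (auto simp: aut_mult)
lemma thi_0: "(\<theta>^^i) 0 = 0"
  by (induct i) auto
lemma thi_1: "(\<theta>^^i) 1 = 1"
  by (induct i) auto
lemma thi_inj: "inj (\<theta>^^i)"
  using th_inj by (rule inj_fn)

lemma hom_agree:
  assumes g: "\<forall>x. x \<noteq> 0 \<longrightarrow> (\<exists>i::nat. x = g ^ i)"
    and m1: "\<And>x y. \<sigma> (x * y) = \<sigma> x * \<sigma> y" and o1: "\<sigma> 1 = (1::'a)" and z1: "\<sigma> 0 = 0"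
    and m2: "\<And>x y. \<tau> (x * y) = \<tau> x * \<tau> y" and o2: "\<tau> 1 = (1::'a)" and z2: "\<tau> 0 = 0"
    and e: "\<sigma> g = \<tau> g"
  shows "\<sigma> x = \<tau> x"
proof (cases "x = 0")
  case True thus ?thesis by (simp add: z1 z2)
next
  case False
  then obtain i where "x = g ^ i" using g by blast
  thus ?thesis using hom_pow[of \<sigma>, OF m1 o1] hom_pow[of \<tau>, OF m2 o2] e by simp
qed

lemma sq_add: "(x + y) * (x + y) = x * x + y * (y::'a)"
proof -
  have "(x + y) * (x + y) = x * x + y * y + (x * y + x * y)" by (simp add: algebra_simps)
  thus ?thesis by simp
qed

lemma fix_lemma:
  assumes "\<theta> x = x" shows "x = 0 \<or> x = 1"
proof -
  obtain g :: 'a where g0: "g \<noteq> 0" and g: "\<forall>x. x \<noteq> 0 \<longrightarrow> (\<exists>i::nat. x = g ^ i)"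
    using gen_exists by blast
  have orb_inj: "inj_on (\<lambda>i. (\<theta>^^i) g) {..<n}"
  proof (rule inj_onI, rule ccontr)
    fix i k assume i: "i \<in> {..<n}" and k: "k \<in> {..<n}" and e: "(\<theta>^^i) g = (\<theta>^^k) g" and ne: "i \<noteq> k"
    have main: "False" if ik: "i < k" "k < n" "(\<theta>^^i) g = (\<theta>^^k) g" for i k
    proof -
      have "(\<theta>^^i) ((\<theta>^^(k-i)) g) = (\<theta>^^i) g"
        using ik by (metis funpow_add le_add_diff_inverse less_imp_le o_apply)
      hence fg: "(\<theta>^^(k-i)) g = id g" using thi_inj[of i] by (simp add: inj_eq)
      have "(\<theta>^^(k-i)) y = id y" for y
        by (rule hom_agree[OF g thi_mult thi_1 thi_0]) (auto simp: fg)
      hence "\<theta>^^(k-i) = id" by auto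
      thus False using gen_min[of "k-i"] ik by auto
    qed
    show False using main[of i k] main[of k i] i k e ne by (cases "i < k") auto
  qed
  define f where "f A = (\<Sum>i\<in>A. g ^ i)" for A :: "nat set"
  have "\<not> inj_on f (Pow {..n})"
  proof
    assume inj: "inj_on f (Pow {..n})"
    have "card (f ` Pow {..n}) = 2 ^ (n+1)" using card_image[OF inj] by (simp add: card_Pow)
    moreover have "card (f ` Pow {..n}) \<le> 2 ^ n" using card_F card_mono[of UNIV "f ` Pow {..n}"] by simp
    ultimately show False by simp
  qed
  then obtain A B where AB: "A \<subseteq> {..n}" "B \<subseteq> {..n}" "A \<noteq> B" "f A = f B"
    unfolding inj_on_def by blast
  define D where "D = (A - B) \<union> (B - A)"
  have Dn: "D \<subseteq> {..n}" "D \<noteq> {}" using AB by (auto simp: D_def)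
  have finD: "finite D" using Dn finite_subset by blast
  have "(\<Sum>i\<in>D. g ^ i) = 0"
  proof -
    have fA: "finite A" "finite B" using AB finite_subset by auto
    have a: "f A = (\<Sum>i\<in>A - B. g ^ i) + (\<Sum>i\<in>A \<inter> B. g ^ i)"
      unfolding f_def using fA by (metis Int_Diff_Un Int_Diff_disjoint sum.union_disjoint finite_Diff finite_Int add.commute inf_commute)
    have b: "f B = (\<Sum>i\<in>B - A. g ^ i) + (\<Sum>i\<in>A \<inter> B. g ^ i)"
      unfolding f_def using fA by (metis Int_Diff_Un Int_Diff_disjoint sum.union_disjoint finite_Diff finite_Int add.commute inf_commute)
    have c: "(\<Sum>i\<in>A - B. g ^ i) = (\<Sum>i\<in>B - A. g ^ i)" using a b AB(4) by simp
    have "(\<Sum>i\<in>D. g ^ i) = (\<Sum>i\<in>A - B. g ^ i) + (\<Sum>i\<in>B - A. g ^ i)"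
      unfolding D_def using fA by (intro sum.union_disjoint) auto
    thus ?thesis using c by simp
  qed
  define p :: "'a poly" where "p = (\<Sum>i\<in>D. monom 1 i)"
  have polyp: "poly p y = (\<Sum>i\<in>D. y ^ i)" for y
    by (simp add: p_def poly_sum poly_monom)
  have coeffp: "coeff p k = (if k \<in> D then 1 else 0)" for k
    unfolding p_def coeff_sum using finD by (simp add: coeff_monom)
  have p0: "p \<noteq> 0"
  proof
    assume "p = 0"
    obtain d where "d \<in> D" using Dn by blast
    thus False using coeffp[of d] \<open>p = 0\<close> by simp
  qed
  have degp: "degree p \<le> n"
    by (rule degree_le) (use Dn in \<open>auto simp: coeffp\<close>)
  have root_hom: "poly p (\<sigma> g) = 0"
    if ad: "\<And>x y. \<sigma> (x + y) = \<sigma> x + \<sigma> y" and z: "\<sigma> 0 = 0"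
      and mu: "\<And>x y. \<sigma> (x * y) = \<sigma> x * \<sigma> y" and o: "\<sigma> 1 = 1" for \<sigma>
  proof -
    have "poly p (\<sigma> g) = (\<Sum>i\<in>D. \<sigma> (g ^ i))" unfolding polyp using hom_pow[of \<sigma>, OF mu o] by simp
    also have "\<dots> = \<sigma> (\<Sum>i\<in>D. g ^ i)" using hom_sum[of \<sigma> "\<lambda>i. g^i" D, OF ad z] by simp
    also have "\<dots> = 0" using \<open>(\<Sum>i\<in>D. g ^ i) = 0\<close> z by simp
    finally show ?thesis .
  qed
  have orb_roots: "(\<lambda>i. (\<theta>^^i) g) ` {..<n} \<subseteq> {x. poly p x = 0}"
  proof (safe)
    fix i show "poly p ((\<theta>^^i) g) = 0" by (rule root_hom[OF thi_add thi_0 thi_mult thi_1])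
  qed
  have sq_root: "poly p (g * g) = 0"
    using root_hom[of "\<lambda>x. x * x"] sq_add by (simp add: algebra_simps)
  have "g * g \<in> (\<lambda>i. (\<theta>^^i) g) ` {..<n}"
  proof (rule ccontr)
    assume nin: "g * g \<notin> (\<lambda>i. (\<theta>^^i) g) ` {..<n}"
    have "card (insert (g * g) ((\<lambda>i. (\<theta>^^i) g) ` {..<n})) = n + 1"
      using nin card_image[OF orb_inj] by simp
    moreover have "card (insert (g * g) ((\<lambda>i. (\<theta>^^i) g) ` {..<n})) \<le> card {x. poly p x = 0}"
      using orb_roots sq_root by (intro card_mono) auto
    moreover have "card {x. poly p x = 0} \<le> n" using card_poly_roots_bound[OF p0] degp by simp
    ultimately show False by simp
  qed
  then obtain k where k: "(\<theta>^^k) g = g * g" by (metis (no_types, lifting) imageE)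
  have "(\<theta>^^k) y = y * y" for y
    by (rule hom_agree[OF g thi_mult thi_1 thi_0]) (auto simp: k)
  moreover have "(\<theta>^^k) x = x" using assms by (induct k) auto
  ultimately have "x * x = x" by simp
  thus ?thesis by (metis mult_cancel_left1 mult_zero_left)
qed

end


locale suz = aut \<theta> n for \<theta> :: "'a::{field,finite} \<Rightarrow> 'a" and n +
  fixes m :: nat and C :: "('a \<times> 'a) set"
  assumes n_def: "n = 2 * m + 1"
    and C_union: "\<forall>g\<in>C. Aord \<theta> g = 4 \<and> Aconjcl \<theta> g \<subseteq> C"
    and C_choice: "\<forall>K\<in>Aclasses4 \<theta>. (K \<subseteq> C) \<longleftrightarrow> \<not> (Ainv \<theta> ` K \<subseteq> C)"
begin

definition L :: "'a \<Rightarrow> 'a" where "L s = \<theta> s + s"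
definition T :: "'a set" where "T = range L"

lemma L_add: "L (s + t) = L s + L t"
  by (simp add: L_def aut_add algebra_simps)

lemma eq_iff_sum0: "(x::'a) = y \<longleftrightarrow> x + y = 0"
  by (metis add.assoc add_0_right two add_0_left)

lemma L_eq: "L s = L t \<longleftrightarrow> t = s \<or> t = s + 1"
proof -
  have "L s = L t \<longleftrightarrow> L (s + t) = 0" using eq_iff_sum0[of "L s" "L t"] by (simp add: L_add)
  also have "\<dots> \<longleftrightarrow> \<theta> (s + t) = s + t" using eq_iff_sum0[of "\<theta> (s + t)" "s + t"] by (simp add: L_def)
  also have "\<dots> \<longleftrightarrow> s + t = 0 \<or> s + t = 1"
    using fix_lemma[of "s+t"] by auto
  also have "\<dots> \<longleftrightarrow> t = s \<or> t = s + 1"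
  proof -
    have "s + t = 0 \<longleftrightarrow> t = s" using eq_iff_sum0[of s t] by auto
    moreover have "s + t = 1 \<longleftrightarrow> t = s + 1"
    proof
      assume "s + t = 1" hence "s + (s + t) = s + 1" by simp
      thus "t = s + 1" by simp
    qed simp
    ultimately show ?thesis by simp
  qed
  finally show ?thesis .
qed

lemma T_add: assumes "x \<in> T" "y \<in> T" shows "x + y \<in> T"
proof -
  obtain s t where "x = L s" "y = L t" using assms unfolding T_def by blast
  hence "x + y = L (s + t)" by (simp add: L_add)
  thus ?thesis unfolding T_def by blast
qed

lemma T0: "0 \<in> T" unfolding T_def by (metis L_def rangeI th0 add_0_right)

lemma card_T: "card (UNIV :: 'a set) = 2 * card T"
proof -
  have "card (UNIV :: 'a set) = (\<Sum>x\<in>(UNIV::'a set). 1::nat)" by simp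
  also have "\<dots> = (\<Sum>y\<in>T. (\<Sum>x\<in>{x. x \<in> UNIV \<and> L x = y}. 1))"
    unfolding T_def using sum.image_gen[of "UNIV::'a set" "\<lambda>_. (1::nat)" L] by simp
  also have "\<dots> = (\<Sum>y\<in>T. 2)"
  proof (rule sum.cong[OF refl])
    fix y assume "y \<in> T"
    then obtain s where y: "y = L s" unfolding T_def by blast
    have "{x. x \<in> UNIV \<and> L x = y} = {s, s + 1}" using L_eq y by auto
    moreover have "s \<noteq> s + 1" by simp
    ultimately show "(\<Sum>x\<in>{x. x \<in> UNIV \<and> L x = y}. 1) = (2::nat)" by simp
  qed
  finally show ?thesis by simp
qed

definition Tr :: "'a \<Rightarrow> 'a" where "Tr x = (\<Sum>i<n. (\<theta>^^i) x)"

lemma Tr_L: "Tr (L s) = 0"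
proof -
  have a: "(\<Sum>i<n. (\<theta>^^i) (\<theta> s)) = (\<Sum>i<n. (\<theta>^^i) s)"
  proof -
    have "(\<Sum>i<Suc n. (\<theta>^^i) s) = s + (\<Sum>i<n. (\<theta>^^(Suc i)) s)"
      by (subst sum.lessThan_Suc_shift) simp
    moreover have "(\<Sum>i<Suc n. (\<theta>^^i) s) = (\<Sum>i<n. (\<theta>^^i) s) + s"
      using gen_n by simp
    moreover have "(\<theta>^^(Suc i)) s = (\<theta>^^i) (\<theta> s)" for i by (simp only: funpow_Suc_right o_apply)
    ultimately show ?thesis by (simp add: add.commute)
  qed
  have "Tr (L s) = (\<Sum>i<n. (\<theta>^^i) (\<theta> s)) + (\<Sum>i<n. (\<theta>^^i) s)"
    by (simp add: Tr_def L_def thi_add sum.distrib)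
  thus ?thesis using a by simp
qed

lemma Tr_1: "Tr 1 = 1"
proof -
  have "Tr 1 = of_nat n" by (simp add: Tr_def thi_1)
  also have "\<dots> = of_nat m * 2 + 1" by (simp add: n_def)
  finally show ?thesis by simp
qed

lemma one_notin_T: "1 \<notin> T"
proof
  assume "1 \<in> T"
  then obtain s where "L s = 1" unfolding T_def by (metis rangeE)
  hence "Tr 1 = 0" using Tr_L by metis
  thus False using Tr_1 by simp
qed

lemma T_cover: "y \<notin> T \<Longrightarrow> y + 1 \<in> T"
proof (rule ccontr)
  assume y: "y \<notin> T" "y + 1 \<notin> T"
  let ?U = "T \<union> (\<lambda>t. t + 1) ` T"
  have disj: "T \<inter> (\<lambda>t. t + 1) ` T = {}"
  proof safe
    fix t assume "t \<in> T" "t + 1 \<in> T"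
    hence "t + (t + 1) \<in> T" by (rule T_add)
    thus "t + 1 \<in> {}" using one_notin_T by simp
  qed
  have "inj_on (\<lambda>t. t + 1) T" by (rule inj_onI) simp
  hence "card ?U = card T + card T" using disj by (simp add: card_Un_disjoint card_image)
  also have "\<dots> = card (UNIV :: 'a set)" using card_T by simp
  finally have "?U = UNIV" by (metis card_eq_UNIV_imp_eq_UNIV finite_UNIV)
  hence "y \<in> ?U" by simp
  then obtain t where "t \<in> T" "y = t + 1" using y(1) by blast
  thus False using y(2) by simp
qed

definition chi :: "'a \<Rightarrow> real" where "chi y = (if y \<in> T then 1 else -1)"

lemma chi_add: "chi (x + y) = chi x * chi y"
proof -
  have c: "x + (x + y) = y" for x y :: 'a by simp
  show ?thesis
  proof (cases "x \<in> T"; cases "y \<in> T")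
    assume "x \<in> T" "y \<in> T" thus ?thesis by (simp add: chi_def T_add)
  next
    assume a: "x \<in> T" "y \<notin> T"
    hence "x + y \<notin> T" using T_add[of x "x+y"] c by auto
    thus ?thesis using a by (simp add: chi_def)
  next
    assume a: "x \<notin> T" "y \<in> T"
    hence "x + y \<notin> T" using T_add[of y "x+y"] c[of y x] by (auto simp: add.commute)
    thus ?thesis using a by (simp add: chi_def)
  next
    assume a: "x \<notin> T" "y \<notin> T"
    have "(x + 1) + (y + 1) \<in> T" using a T_cover T_add by blast
    moreover have "(x + 1) + (y + 1) = x + y" by (simp add: algebra_simps)
    ultimately show ?thesis using a by (simp add: chi_def)
  qed
qed

lemma chi1: "chi 1 = -1" using one_notin_T by (simp add: chi_def)
lemma chi0: "chi 0 = 1" using T0 by (simp add: chi_def)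

lemma sum_chi: "(\<Sum>y\<in>UNIV. chi y) = 0"
proof -
  have "(\<Sum>y\<in>UNIV. chi y) = (\<Sum>y\<in>UNIV. chi (y + 1))"
    by (rule sum.reindex_bij_witness[of _ "\<lambda>y. y + 1" "\<lambda>y. y + 1"]) auto
  also have "\<dots> = - (\<Sum>y\<in>UNIV. chi y)" by (simp add: chi_add chi1 sum_negf)
  finally show ?thesis by simp
qed



end

context suz
begin


definition N where "N a = a * \<theta> a"

lemma th_nz: "a \<noteq> 0 \<Longrightarrow> \<theta> a \<noteq> 0"
  using th_inj th0 by (metis injD)

lemma N_nz: "a \<noteq> 0 \<Longrightarrow> N a \<noteq> 0"
  by (simp add: N_def th_nz)

lemma Amul_simp[simp]: "Amul \<theta> (a, b) (c, d) = (a + c, b + d + a * \<theta> c)"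
  by (simp add: Amul_def)
lemma Ainv_simp[simp]: "Ainv \<theta> (a, b) = (a, N a + b)"
  by (simp add: Ainv_def N_def)


lemma A_assoc: "Amul \<theta> (Amul \<theta> x y) z = Amul \<theta> x (Amul \<theta> y z)"
  by (cases x; cases y; cases z) (simp add: aut_add algebra_simps)

lemma A_one_l[simp]: "Amul \<theta> Aone x = x"
  by (cases x) (simp add: Aone_def)
lemma A_one_r[simp]: "Amul \<theta> x Aone = x"
  by (cases x) (simp add: Aone_def)
lemma A_inv_l[simp]: "Amul \<theta> (Ainv \<theta> x) x = Aone"
  by (cases x) (simp add: Aone_def N_def algebra_simps)
lemma A_inv_r[simp]: "Amul \<theta> x (Ainv \<theta> x) = Aone"
  by (cases x) (simp add: Aone_def N_def algebra_simps)

lemma A_inv_inv[simp]: "Ainv \<theta> (Ainv \<theta> x) = x"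
  by (cases x) simp

lemma A_inv_mul: "Ainv \<theta> (Amul \<theta> x y) = Amul \<theta> (Ainv \<theta> y) (Ainv \<theta> x)"
  by (cases x; cases y) (simp add: N_def aut_add aut_mult algebra_simps)


lemma Apow_1: "Apow \<theta> g 1 = g" by simp
lemma Apow_2: "Apow \<theta> (a, b) 2 = (0, N a)"
  by (simp add: numeral_2_eq_2 N_def)
lemma Apow_3: "Apow \<theta> (a, b) 3 = (a, N a + b)"
  by (simp add: numeral_3_eq_3 N_def algebra_simps)
lemma Apow_4: "Apow \<theta> (a, b) 4 = Aone"
proof -
  have "Apow \<theta> (a, b) 4 = Amul \<theta> (Apow \<theta> (a, b) 3) (a, b)"
    by (simp add: numeral_eq_Suc)
  thus ?thesis by (simp add: Apow_3 N_def Aone_def algebra_simps)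
qed

lemma Aord_iff: "Aord \<theta> g = 4 \<longleftrightarrow> fst g \<noteq> 0"
proof (cases g)
  case (Pair a b)
  show ?thesis
  proof (cases "a = 0")
    case True
    have "Apow \<theta> g 2 = Aone" using Pair True by (simp add: Apow_2 Aone_def N_def)
    hence "Aord \<theta> g \<le> 2" unfolding Aord_def by (intro Least_le) simp
    thus ?thesis using Pair True by simp
  next
    case False
    have ne1: "Apow \<theta> g 1 \<noteq> Aone" using Pair False by (simp add: Aone_def)
    have ne2: "Apow \<theta> g 2 \<noteq> Aone" using Pair False N_nz by (simp add: Apow_2 Aone_def)
    have ne3: "Apow \<theta> g 3 \<noteq> Aone" using Pair False by (simp add: Apow_3 Aone_def)
    have "Aord \<theta> g = 4" unfolding Aord_def
    proof (rule Least_equality)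
      show "0 < (4::nat) \<and> Apow \<theta> g 4 = Aone" using Pair by (simp add: Apow_4)
    next
      fix k assume k: "0 < k \<and> Apow \<theta> g k = Aone"
      show "4 \<le> k"
      proof (rule ccontr)
        assume "\<not> 4 \<le> k"
        hence "k = 1 \<or> k = 2 \<or> k = 3" using k by auto
        thus False using k ne1 ne2 ne3 by auto
      qed
    qed
    thus ?thesis using Pair False by simp
  qed
qed

lemma conj_formula: "Amul \<theta> (Amul \<theta> (c, d) (a, b)) (Ainv \<theta> (c, d)) = (a, b + a * \<theta> c + c * \<theta> a)"
  by (simp add: N_def algebra_simps)

lemma Aconjcl_eq:
  assumes "a \<noteq> 0"
  shows "Aconjcl \<theta> (a, b) = {(a, b + N a * t) | t. t \<in> T}"
proof -
  have "Aconjcl \<theta> (a, b) = {(a, b + a * \<theta> c + c * \<theta> a) | c. True}"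
  proof
    show "Aconjcl \<theta> (a, b) \<subseteq> {(a, b + a * \<theta> c + c * \<theta> a) | c. True}"
    proof
      fix z assume "z \<in> Aconjcl \<theta> (a, b)"
      then obtain x where z: "z = Amul \<theta> (Amul \<theta> x (a, b)) (Ainv \<theta> x)" unfolding Aconjcl_def by blast
      obtain c d where x: "x = (c, d)" by fastforce
      have "z = (a, b + a * \<theta> c + c * \<theta> a)" unfolding z x conj_formula ..
      thus "z \<in> {(a, b + a * \<theta> c + c * \<theta> a) | c. True}" by blast
    qed
  next
    show "{(a, b + a * \<theta> c + c * \<theta> a) | c. True} \<subseteq> Aconjcl \<theta> (a, b)"
    proof
      fix z assume "z \<in> {(a, b + a * \<theta> c + c * \<theta> a) | c. True}"
      then obtain c where "z = (a, b + a * \<theta> c + c * \<theta> a)" by blast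
      hence "z = Amul \<theta> (Amul \<theta> (c, 0) (a, b)) (Ainv \<theta> (c, 0))" unfolding conj_formula .
      thus "z \<in> Aconjcl \<theta> (a, b)" unfolding Aconjcl_def by blast
    qed
  qed
  also have "\<dots> = {(a, b + N a * t) | t. t \<in> T}"
  proof
    show "{(a, b + a * \<theta> c + c * \<theta> a) | c. True} \<subseteq> {(a, b + N a * t) | t. t \<in> T}"
    proof
      fix z assume "z \<in> {(a, b + a * \<theta> c + c * \<theta> a) | c. True}"
      then obtain c where z: "z = (a, b + a * \<theta> c + c * \<theta> a)" by blast
      define s where "s = c / a"
      have c: "c = a * s" using assms by (simp add: s_def)
      have e: "a * \<theta> c + c * \<theta> a = N a * L s" by (simp add: c N_def L_def aut_mult algebra_simps)
      have "z = (a, b + N a * L s)" using z e by (simp add: add.assoc)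
      moreover have "L s \<in> T" by (simp add: T_def)
      ultimately show "z \<in> {(a, b + N a * t) | t. t \<in> T}" by blast
    qed
  next
    show "{(a, b + N a * t) | t. t \<in> T} \<subseteq> {(a, b + a * \<theta> c + c * \<theta> a) | c. True}"
    proof
      fix z assume "z \<in> {(a, b + N a * t) | t. t \<in> T}"
      then obtain s where z: "z = (a, b + N a * L s)" unfolding T_def by blast
      have "a * \<theta> (a * s) + (a * s) * \<theta> a = N a * L s" by (simp add: N_def L_def aut_mult algebra_simps)
      hence "z = (a, b + a * \<theta> (a * s) + (a * s) * \<theta> a)" using z by (simp add: add.assoc)
      thus "z \<in> {(a, b + a * \<theta> c + c * \<theta> a) | c. True}" by blast
    qed
  qed
  finally show ?thesis .
qed

lemma C_fst: assumes "g \<in> C" shows "fst g \<noteq> 0"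
proof -
  have "Aord \<theta> g = 4" using C_union assms by blast
  thus ?thesis using Aord_iff by simp
qed

lemma C_shift:
  assumes "a \<noteq> 0" "t \<in> T" "(a, b) \<in> C" shows "(a, b + N a * t) \<in> C"
proof -
  have "Aconjcl \<theta> (a, b) \<subseteq> C" using C_union assms(3) by blast
  moreover have "(a, b + N a * t) \<in> Aconjcl \<theta> (a, b)" unfolding Aconjcl_eq[OF assms(1)] using assms(2) by blast
  ultimately show ?thesis by blast
qed

lemma C_flip:
  assumes a: "a \<noteq> 0" shows "(a, b) \<in> C \<longleftrightarrow> (a, N a + b) \<notin> C"
proof -
  let ?K = "Aconjcl \<theta> (a, b)"
  have K: "?K \<in> Aclasses4 \<theta>" unfolding Aclasses4_def using Aord_iff a by auto
  have Ksub: "Ainv \<theta> ` ?K \<subseteq> Aconjcl \<theta> (a, N a + b)"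
  proof
    fix z assume "z \<in> Ainv \<theta> ` ?K"
    hence "z \<in> Ainv \<theta> ` {(a, b + N a * t) |t. t \<in> T}" using Aconjcl_eq[OF a, of b] by simp
    then obtain t where t: "t \<in> T" "z = Ainv \<theta> (a, b + N a * t)" by blast
    hence "z = (a, N a + b + N a * t)" by (simp add: add.assoc)
    hence "z \<in> {(a, N a + b + N a * t) |t. t \<in> T}" using t(1) by blast
    thus "z \<in> Aconjcl \<theta> (a, N a + b)" using Aconjcl_eq[OF a, of "N a + b"] by simp
  qed
  have "(a, b + N a * 0) \<in> {(a, b + N a * t) |t. t \<in> T}" using T0 by blast
  hence gK: "(a, b) \<in> ?K" using Aconjcl_eq[OF a, of b] by simp
  have "Ainv \<theta> (a, b) = (a, N a + b)" by simp
  hence giK: "(a, N a + b) \<in> Ainv \<theta> ` ?K" using gK by (metis imageI)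
  show ?thesis
  proof
    assume g: "(a, b) \<in> C"
    hence "?K \<subseteq> C" using C_union by blast
    hence nK: "\<not> Ainv \<theta> ` ?K \<subseteq> C" using C_choice K by blast
    show "(a, N a + b) \<notin> C"
    proof
      assume "(a, N a + b) \<in> C"
      hence "Aconjcl \<theta> (a, N a + b) \<subseteq> C" using C_union by blast
      thus False using Ksub nK by blast
    qed
  next
    assume "(a, N a + b) \<notin> C"
    hence "\<not> Ainv \<theta> ` ?K \<subseteq> C" using giK by blast
    hence "?K \<subseteq> C" using C_choice K by blast
    thus "(a, b) \<in> C" using gK by blast
  qed
qed

definition sg :: "'a \<times> 'a \<Rightarrow> real" where
  "sg g = (if g \<in> C then 1 else if Ainv \<theta> g \<in> C then -1 else 0)"

lemma sg0: "sg (0, b) = 0"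
proof -
  have "(0, b) \<notin> C" "(0, N 0 + b) \<notin> C" using C_fst by fastforce+
  thus ?thesis by (simp add: sg_def)
qed

lemma sg_nz: assumes a: "a \<noteq> 0" shows "sg (a, b) = (if (a, b) \<in> C then 1 else -1)"
proof (cases "(a, b) \<in> C")
  case True thus ?thesis by (simp add: sg_def)
next
  case False
  hence "(a, N a + b) \<in> C" using C_flip[OF a, of b] by blast
  thus ?thesis using False by (simp add: sg_def)
qed

lemma sg_abs: "a \<noteq> 0 \<Longrightarrow> \<bar>sg (a, b)\<bar> = 1"
  by (simp add: sg_nz)

lemma sg_sq: "a \<noteq> 0 \<Longrightarrow> sg (a, b) * sg (a, b) = 1"
  by (simp add: sg_nz)

lemma sg_shift:
  assumes a: "a \<noteq> 0" shows "sg (a, b + N a * y) = sg (a, b) * chi y"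
proof (cases "y \<in> T")
  case True
  have "(a, b + N a * y) \<in> C \<longleftrightarrow> (a, b) \<in> C"
  proof
    assume "(a, b + N a * y) \<in> C"
    from C_shift[OF a True this] show "(a, b) \<in> C" by (simp add: add.assoc)
  next
    assume "(a, b) \<in> C" from C_shift[OF a True this] show "(a, b + N a * y) \<in> C" .
  qed
  thus ?thesis using True a by (simp add: sg_nz chi_def)
next
  case False
  define t where "t = y + 1"
  have t: "t \<in> T" using T_cover False by (simp add: t_def)
  have y: "b + N a * y = N a + (b + N a * t)" by (simp add: t_def algebra_simps)
  have "(a, b + N a * t) \<in> C \<longleftrightarrow> (a, b) \<in> C"
  proof
    assume "(a, b + N a * t) \<in> C"
    from C_shift[OF a t this] show "(a, b) \<in> C" by (simp add: add.assoc)
  next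
    assume "(a, b) \<in> C" from C_shift[OF a t this] show "(a, b + N a * t) \<in> C" .
  qed
  moreover have e: "(a, b + N a * y) \<in> C \<longleftrightarrow> (a, N a + (b + N a * t)) \<in> C" by (simp only: y)
  ultimately have "(a, b + N a * y) \<in> C \<longleftrightarrow> (a, b) \<notin> C" using C_flip[OF a, of "b + N a * t"] by blast
  thus ?thesis using False a by (simp add: sg_nz chi_def)
qed

end

context suz
begin

lemma card_real: "real (card (UNIV :: 'a set)) = 2 ^ n"
  using card_F by simp

lemma th_div: "\<theta> (x / y) = \<theta> x / \<theta> y"
proof (cases "y = 0")
  case True thus ?thesis by simp
next
  case False
  have "\<theta> (x / y) * \<theta> y = \<theta> x" using False by (simp flip: aut_mult)
  thus ?thesis using th_nz[OF False] by (simp add: field_simps)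
qed

lemma N_inj: assumes a: "a \<noteq> 0" and a': "a' \<noteq> 0" and e: "N a = N a'" shows "a = a'"
proof -
  define r where "r = a / a'"
  have r0: "r \<noteq> 0" using a a' by (simp add: r_def)
  have "r * \<theta> r = N a / N a'" by (simp add: r_def th_div N_def field_simps)
  hence rr: "r * \<theta> r = 1" using e N_nz[OF a'] by simp
  hence t1: "\<theta> r = 1 / r" using r0 by (simp add: field_simps)
  have t2: "\<theta> (\<theta> r) = r" using t1 th_div r0 by simp
  have "(\<theta>^^(2*k)) r = r" for k
  proof (induct k)
    case 0 thus ?case by simp
  next
    case (Suc k)
    have "2 * Suc k = Suc (Suc (2 * k))" by simp
    hence "(\<theta>^^(2 * Suc k)) r = \<theta> (\<theta> ((\<theta>^^(2*k)) r))" by (simp only: funpow.simps o_apply)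
    thus ?case using Suc t2 by simp
  qed
  moreover have "n + 1 = 2 * (m + 1)" using n_def by simp
  ultimately have "(\<theta>^^(n+1)) r = r" by metis
  moreover have "(\<theta>^^(n+1)) r = \<theta> r" using gen_n by (simp add: funpow_Suc_right)
  ultimately have "\<theta> r = r" by simp
  hence "r = 1" using fix_lemma r0 by blast
  thus ?thesis using a' by (simp add: r_def)
qed

lemma sum_pairs: "(\<Sum>x\<in>(UNIV :: ('a \<times> 'a) set). f x) = (\<Sum>a\<in>UNIV. \<Sum>b\<in>UNIV. f (a, b))"
  by (simp add: sum.cartesian_product' flip: UNIV_Times_UNIV)

lemma sum_shift: "(\<Sum>b\<in>UNIV. h (b + k)) = (\<Sum>b\<in>(UNIV :: 'a set). (h b :: real))"
  by (rule sum.reindex_bij_witness[of _ "\<lambda>b. b + k" "\<lambda>b. b + k"]) auto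

lemma sum_scale: assumes "c \<noteq> 0" shows "(\<Sum>b\<in>UNIV. h (c * b)) = (\<Sum>b\<in>(UNIV :: 'a set). (h b :: real))"
  by (rule sum.reindex_bij_witness[of _ "\<lambda>b. b / c" "\<lambda>b. c * b"]) (use assms in auto)

lemma sum_chi_scale: "c \<noteq> 0 \<Longrightarrow> (\<Sum>y\<in>UNIV. chi (c * y)) = 0"
  using sum_scale[of c chi] sum_chi by simp

lemma sum_fiber: "(\<Sum>b\<in>UNIV. sg (a, b)) = 0"
proof (cases "a = 0")
  case True thus ?thesis by (simp add: sg0)
next
  case False
  have "(\<Sum>b\<in>UNIV. sg (a, b)) = (\<Sum>y\<in>UNIV. sg (a, N a * y))"
    using sum_scale[OF N_nz[OF False], of "\<lambda>b. sg (a, b)"] by simp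
  also have "\<dots> = (\<Sum>y\<in>UNIV. sg (a, 0) * chi y)"
    using sg_shift[OF False, of 0] by simp
  also have "\<dots> = 0" by (simp add: sum_distrib_left[symmetric] sum_chi)
  finally show ?thesis .
qed

lemma inner_p: assumes p: "p \<noteq> 0"
  shows "(\<Sum>b\<in>UNIV. sg (a, b) * sg (p + a, k + b)) = 0"
proof (cases "a = 0 \<or> p + a = 0")
  case True thus ?thesis by (auto simp: sg0)
next
  case False
  hence a: "a \<noteq> 0" and a': "p + a \<noteq> 0" by auto
  define r where "r = N a / N (p + a)"
  have r1: "1 + r \<noteq> 0"
  proof
    assume "1 + r = 0"
    hence "r = 1" using eq_iff_sum0[of r 1] by (simp add: add.commute)
    hence "N a = N (p + a)" using N_nz[OF a'] by (simp add: r_def)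
    hence "a = p + a" using N_inj a a' by blast
    thus False using p by simp
  qed
  have kk: "k + N a * y = k + N (p + a) * (r * y)" for y
    using N_nz[OF a'] by (simp add: r_def)
  have "(\<Sum>b\<in>UNIV. sg (a, b) * sg (p + a, k + b)) = (\<Sum>y\<in>UNIV. sg (a, N a * y) * sg (p + a, k + N a * y))"
    using sum_scale[OF N_nz[OF a], of "\<lambda>b. sg (a, b) * sg (p + a, k + b)"] by simp
  also have "\<dots> = (\<Sum>y\<in>UNIV. (sg (a, 0) * sg (p + a, k)) * chi ((1 + r) * y))"
  proof (rule sum.cong[OF refl])
    fix y
    have e1: "sg (a, N a * y) = sg (a, 0) * chi y" using sg_shift[OF a, of 0 y] by simp
    have e2: "sg (p + a, k + N a * y) = sg (p + a, k) * chi (r * y)"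
      unfolding kk by (rule sg_shift[OF a'])
    have e3: "chi y * chi (r * y) = chi ((1 + r) * y)" by (simp add: chi_add[symmetric] algebra_simps)
    have "sg (a, N a * y) * sg (p + a, k + N a * y) = (sg (a, 0) * sg (p + a, k)) * (chi y * chi (r * y))"
      unfolding e1 e2 by (simp only: mult_ac)
    thus "sg (a, N a * y) * sg (p + a, k + N a * y) = (sg (a, 0) * sg (p + a, k)) * chi ((1 + r) * y)"
      unfolding e3 .
  qed
  also have "\<dots> = 0" by (simp add: sum_distrib_left[symmetric] sum_chi_scale[OF r1])
  finally show ?thesis .
qed

lemma inner_0: assumes a: "a \<noteq> 0"
  shows "(\<Sum>b\<in>UNIV. sg (a, b) * sg (a, q + (N a + b))) = - (2 ^ n) * chi (q / N a)"
proof -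
  have e: "q + (N a + b) = b + N a * (q / N a + 1)" for b
    using N_nz[OF a] by (simp add: algebra_simps)
  have "(\<Sum>b\<in>UNIV. sg (a, b) * sg (a, q + (N a + b))) = (\<Sum>b\<in>(UNIV::'a set). - chi (q / N a))"
  proof (rule sum.cong[OF refl])
    fix b
    have "sg (a, q + (N a + b)) = sg (a, b) * chi (q / N a + 1)" unfolding e by (rule sg_shift[OF a])
    also have "\<dots> = - sg (a, b) * chi (q / N a)" by (simp add: chi_add chi1)
    finally have h: "sg (a, q + (N a + b)) = - sg (a, b) * chi (q / N a)" .
    show "sg (a, b) * sg (a, q + (N a + b)) = - chi (q / N a)"
      unfolding h by (cases "(a, b) \<in> C") (simp_all add: sg_nz[OF a])
  qed
  also have "\<dots> = - (2 ^ n) * chi (q / N a)" using card_real by simp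
  finally show ?thesis .
qed

lemma mul_inv_formula: "Amul \<theta> (p, q) (Ainv \<theta> (a, b)) = (p + a, q + N a + p * \<theta> a + b)"
  by (simp add: add_ac)

lemma Q_val:
  "(\<Sum>x\<in>UNIV. sg x * sg (Amul \<theta> (p, q) (Ainv \<theta> x))) =
     (if p = 0 then (if q = 0 then 2 ^ n - 4 ^ n else 2 ^ n) else 0)"
proof -
  have "(\<Sum>x\<in>UNIV. sg x * sg (Amul \<theta> (p, q) (Ainv \<theta> x))) =
        (\<Sum>a\<in>UNIV. \<Sum>b\<in>UNIV. sg (a, b) * sg (p + a, (q + N a + p * \<theta> a) + b))"
    by (simp only: sum_pairs mul_inv_formula)
  also have "\<dots> = (if p = 0 then (if q = 0 then 2 ^ n - 4 ^ n else 2 ^ n) else 0)"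
  proof (cases "p = 0")
    case False
    thus ?thesis using inner_p[OF False] by simp
  next
    case True
    have "(\<Sum>a\<in>UNIV. \<Sum>b\<in>UNIV. sg (a, b) * sg (p + a, (q + N a + p * \<theta> a) + b))
        = (\<Sum>a\<in>UNIV. if a = 0 then 0 else - (2 ^ n) * chi (q / N a))"
    proof (rule sum.cong[OF refl])
      fix a
      show "(\<Sum>b\<in>UNIV. sg (a, b) * sg (p + a, (q + N a + p * \<theta> a) + b)) = (if a = 0 then 0 else - (2 ^ n) * chi (q / N a))"
      proof (cases "a = 0")
        case True thus ?thesis by (simp add: sg0)
      next
        case False
        thus ?thesis using inner_0[OF False, of q] \<open>p = 0\<close> by (simp add: add.assoc)
      qed
    qed
    also have "\<dots> = (\<Sum>a\<in>UNIV - {0}. - (2 ^ n) * chi (q / N a))"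
      by (simp add: sum.If_cases Diff_eq)
    also have "\<dots> = - (2 ^ n) * (\<Sum>a\<in>UNIV - {0}. chi (q / N a))"
      by (simp add: sum_distrib_left)
    also have "\<dots> = (if q = 0 then 2 ^ n - 4 ^ n else 2 ^ n)"
    proof (cases "q = 0")
      case True
      have "card (UNIV - {0 :: 'a}) = 2 ^ n - 1" using card_F by (simp add: card_Diff_singleton)
      moreover have "real (2 ^ n - 1 :: nat) = 2 ^ n - 1" by (simp add: of_nat_diff)
      ultimately have "real (card (UNIV - {0 :: 'a})) = 2 ^ n - 1" by simp
      moreover have "(\<Sum>a\<in>UNIV - {0}. chi (q / N a)) = real (card (UNIV - {0 :: 'a}))" using True by (simp add: chi0)
      ultimately have s: "(\<Sum>a\<in>UNIV - {0}. chi (q / N a)) = 2 ^ n - 1" by simp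
      have f4: "(4::real) ^ n = 2 ^ n * 2 ^ n" by (simp flip: power_mult_distrib)
      show ?thesis using True unfolding s f4 by (simp add: algebra_simps)
    next
      case False
      define f where "f a = q / N a" for a
      have inj: "inj_on f (UNIV - {0})"
      proof (rule inj_onI)
        fix x y assume xy: "x \<in> UNIV - {0}" "y \<in> UNIV - {0}" "f x = f y"
        hence nz: "N x \<noteq> 0" "N y \<noteq> 0" using N_nz by auto
        have "N x = N y" using xy(3) nz False by (simp add: f_def field_simps)
        thus "x = y" using N_inj xy by blast
      qed
      have img: "f ` (UNIV - {0}) = UNIV - {0}"
      proof (rule endo_inj_surj[OF _ _ inj])
        show "finite (UNIV - {0::'a})" by simp
        show "f ` (UNIV - {0}) \<subseteq> UNIV - {0}"
        proof
          fix z assume "z \<in> f ` (UNIV - {0})"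
          then obtain x where x: "x \<noteq> 0" "z = f x" by blast
          thus "z \<in> UNIV - {0}" using False N_nz[OF x(1)] by (simp add: f_def)
        qed
      qed
      have "(\<Sum>a\<in>UNIV - {0}. chi (q / N a)) = (\<Sum>z\<in>UNIV - {0}. chi z)"
        using sum.reindex[OF inj, of chi] img by (simp add: f_def)
      also have "\<dots> = (\<Sum>z\<in>UNIV. chi z) - chi 0"
        by (simp add: sum_diff1)
      also have "\<dots> = -1" by (simp add: sum_chi chi0)
      finally show ?thesis using False by simp
    qed
    finally show ?thesis using True by simp
  qed
  finally show ?thesis .
qed

end

context suz
begin

definition S where "S u v = sg (Amul \<theta> v (Ainv \<theta> u))"
definition Zm :: "'a \<times> 'a \<Rightarrow> 'a \<times> 'a \<Rightarrow> real" where "Zm u v = (if fst u = fst v then 1 else 0)"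
definition dl :: "'a \<times> 'a \<Rightarrow> 'a \<times> 'a \<Rightarrow> real" where "dl u v = (if u = v then 1 else 0)"
definition B where "B u v = 2 ^ n * Zm u v - 4 ^ n * dl u v"

lemma mul_eq_iff: "v = Amul \<theta> c u \<longleftrightarrow> c = Amul \<theta> v (Ainv \<theta> u)"
proof
  assume "v = Amul \<theta> c u"
  thus "c = Amul \<theta> v (Ainv \<theta> u)" by (simp add: A_assoc)
next
  assume "c = Amul \<theta> v (Ainv \<theta> u)"
  thus "v = Amul \<theta> c u" by (simp add: A_assoc)
qed

lemma skew_eq: "skew_adj (Amul \<theta>) C u v = S u v"
proof -
  have gen: "(\<exists>c\<in>C. y = Amul \<theta> c x) \<longleftrightarrow> Amul \<theta> y (Ainv \<theta> x) \<in> C" for x y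
  proof
    assume "\<exists>c\<in>C. y = Amul \<theta> c x"
    then obtain c where c: "c \<in> C" "y = Amul \<theta> c x" by blast
    have "c = Amul \<theta> y (Ainv \<theta> x)" using mul_eq_iff[THEN iffD1, OF c(2)] .
    thus "Amul \<theta> y (Ainv \<theta> x) \<in> C" using c(1) by simp
  next
    assume a: "Amul \<theta> y (Ainv \<theta> x) \<in> C"
    have "y = Amul \<theta> (Amul \<theta> y (Ainv \<theta> x)) x" using mul_eq_iff[THEN iffD2, OF refl] .
    thus "\<exists>c\<in>C. y = Amul \<theta> c x" using a by blast
  qed
  have 1: "(\<exists>c\<in>C. v = Amul \<theta> c u) \<longleftrightarrow> Amul \<theta> v (Ainv \<theta> u) \<in> C"
    by (rule gen)
  have "(\<exists>c\<in>C. u = Amul \<theta> c v) \<longleftrightarrow> Amul \<theta> u (Ainv \<theta> v) \<in> C"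
    by (rule gen)
  moreover have "Amul \<theta> u (Ainv \<theta> v) = Ainv \<theta> (Amul \<theta> v (Ainv \<theta> u))"
    by (simp only: A_inv_mul A_inv_inv)
  ultimately have 2: "(\<exists>c\<in>C. u = Amul \<theta> c v) \<longleftrightarrow> Ainv \<theta> (Amul \<theta> v (Ainv \<theta> u)) \<in> C" by (simp only:)
  show ?thesis unfolding skew_adj_def S_def sg_def 1 2 ..
qed

lemma E1: "(\<Sum>w\<in>UNIV. S u w * S w v) = B u v"
proof -
  define g where "g = Amul \<theta> v (Ainv \<theta> u)"
  have "(\<Sum>w\<in>UNIV. S u w * S w v) = (\<Sum>x\<in>UNIV. S u (Amul \<theta> x u) * S (Amul \<theta> x u) v)"
  proof (rule sum.reindex_bij_witness[of _ "\<lambda>x. Amul \<theta> x u" "\<lambda>w. Amul \<theta> w (Ainv \<theta> u)"])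
    have e1: "Amul \<theta> (Amul \<theta> a (Ainv \<theta> u)) u = a" for a
      by (simp only: A_assoc A_inv_l A_one_r)
    have e2: "Amul \<theta> (Amul \<theta> a u) (Ainv \<theta> u) = a" for a
      by (simp only: A_assoc A_inv_r A_one_r)
    fix a
    show "Amul \<theta> (Amul \<theta> a (Ainv \<theta> u)) u = a" by (rule e1)
    show "Amul \<theta> a (Ainv \<theta> u) \<in> UNIV" by simp
    show "S u (Amul \<theta> (Amul \<theta> a (Ainv \<theta> u)) u) * S (Amul \<theta> (Amul \<theta> a (Ainv \<theta> u)) u) v = S u a * S a v"
      by (simp only: e1)
  next
    fix b
    show "Amul \<theta> (Amul \<theta> b u) (Ainv \<theta> u) = b" by (simp only: A_assoc A_inv_r A_one_r)
    show "Amul \<theta> b u \<in> UNIV" by simp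
  qed
  also have "\<dots> = (\<Sum>x\<in>UNIV. sg x * sg (Amul \<theta> g (Ainv \<theta> x)))"
  proof (rule sum.cong[OF refl])
    fix x
    have "S u (Amul \<theta> x u) = sg x" by (simp only: S_def A_assoc A_inv_r A_one_r)
    moreover have "S (Amul \<theta> x u) v = sg (Amul \<theta> g (Ainv \<theta> x))"
      by (simp only: S_def g_def A_inv_mul A_assoc)
    ultimately show "S u (Amul \<theta> x u) * S (Amul \<theta> x u) v = sg x * sg (Amul \<theta> g (Ainv \<theta> x))" by simp
  qed
  also have "\<dots> = (if fst g = 0 then (if snd g = 0 then 2 ^ n - 4 ^ n else 2 ^ n) else 0)"
    using Q_val[of "fst g" "snd g"] by simp
  also have "\<dots> = B u v"
  proof -
    have p: "fst g = 0 \<longleftrightarrow> fst u = fst v"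
      using eq_iff_sum0[of "fst u" "fst v"] by (cases u; cases v) (simp add: g_def add.commute)
    have gq: "(fst g = 0 \<and> snd g = 0) \<longleftrightarrow> u = v"
    proof
      assume "fst g = 0 \<and> snd g = 0"
      hence "g = Aone" by (simp add: Aone_def prod_eq_iff)
      hence "Amul \<theta> g u = u" by (simp only: A_one_l)
      thus "u = v" by (simp only: g_def A_assoc A_inv_l A_one_r)
    next
      assume "u = v" thus "fst g = 0 \<and> snd g = 0" by (simp add: g_def Aone_def)
    qed
    show ?thesis
    proof (cases "u = v")
      case True
      hence "fst g = 0" "snd g = 0" using gq by auto
      thus ?thesis using True by (simp add: B_def Zm_def dl_def)
    next
      case False
      hence ndl: "dl u v = 0" by (simp add: dl_def)
      show ?thesis
      proof (cases "fst u = fst v")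
        case True
        hence "fst g = 0" "snd g \<noteq> 0" using p gq False by auto
        thus ?thesis using True ndl by (simp add: B_def Zm_def)
      next
        case F2: False
        hence "fst g \<noteq> 0" using p by auto
        thus ?thesis using F2 ndl by (simp add: B_def Zm_def)
      qed
    qed
  qed
  finally show ?thesis .
qed

lemma E2: "(\<Sum>w\<in>UNIV. Zm u w * S w v) = 0"
proof -
  obtain c d where v: "v = (c, d)" by fastforce
  have "(\<Sum>w\<in>UNIV. Zm u w * S w v) = (\<Sum>a\<in>UNIV. \<Sum>b\<in>UNIV. Zm u (a, b) * S (a, b) v)"
    by (rule sum_pairs)
  also have "\<dots> = (\<Sum>a\<in>UNIV. if a = fst u then (\<Sum>b\<in>UNIV. S (a, b) v) else 0)"
    by (rule sum.cong[OF refl]) (simp add: Zm_def)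
  also have "\<dots> = (\<Sum>b\<in>UNIV. S (fst u, b) v)" by simp
  also have "\<dots> = (\<Sum>b\<in>UNIV. sg (c + fst u, b + (d + N (fst u) + c * \<theta> (fst u))))"
    by (rule sum.cong[OF refl]) (simp add: S_def v mul_inv_formula add_ac)
  also have "\<dots> = (\<Sum>b\<in>UNIV. sg (c + fst u, b))"
    by (rule sum_shift)
  also have "\<dots> = 0" by (rule sum_fiber)
  finally show ?thesis .
qed

lemma sum_delta_gen: "(\<Sum>w\<in>UNIV. (if u = w then 1 else 0) * X w) = (X (u::'b::finite) :: real)"
proof -
  have "(\<Sum>w\<in>UNIV. (if u = w then 1 else 0) * X w) = (\<Sum>w\<in>UNIV. if u = w then X w else 0)"
    by (rule sum.cong) auto
  thus ?thesis by simp
qed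

lemma sum_dl: "(\<Sum>w\<in>UNIV. dl u w * X w) = (X u :: real)"
  unfolding dl_def by (rule sum_delta_gen)

lemma sum_factor: "(\<Sum>w\<in>A. (c * f w) * (d * g w)) = c * d * (\<Sum>w\<in>A. f w * g w :: real)"
  by (simp add: sum_distrib_left mult_ac)

lemma pow_formula:
  fixes \<tau> :: real
  defines "M \<equiv> (\<lambda>u v. \<tau> * S u v)"
  shows "mat_pow M (2*k+1) u v = \<tau>^(2*k+1) * (-(4^n))^k * S u v \<and>
         mat_pow M (2*k+2) u v = \<tau>^(2*k+2) * (-(4^n))^k * B u v"
proof (induct k arbitrary: u v)
  case 0
  have m1: "mat_pow M 1 u v = \<tau> * S u v" for u v
    using sum_delta_gen[of u "\<lambda>w. M w v"] by (simp add: M_def)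
  have "mat_pow M 2 u v = (\<Sum>w\<in>UNIV. mat_pow M 1 u w * M w v)"
    by (simp add: numeral_2_eq_2)
  also have "\<dots> = (\<Sum>w\<in>UNIV. (\<tau> * S u w) * (\<tau> * S w v))"
    by (simp only: m1[unfolded M_def] M_def)
  also have "\<dots> = \<tau>^2 * (\<Sum>w\<in>UNIV. S u w * S w v)"
    by (simp add: sum_distrib_left power2_eq_square mult_ac)
  finally have m2: "mat_pow M 2 u v = \<tau>^2 * B u v" using E1 by simp
  have e: "(2::nat) * 0 + 1 = 1" "(2::nat) * 0 + 2 = 2" by simp_all
  show ?case unfolding e using m1[of u v] m2 by (simp only: power_one_right power_0 mult_1_right)
next
  case (Suc k)
  have A: "mat_pow M (2*k+1) u v = \<tau>^(2*k+1) * (-(4^n))^k * S u v" for u v using Suc by blast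
  have Bk: "mat_pow M (2*k+2) u v = \<tau>^(2*k+2) * (-(4^n))^k * B u v" for u v using Suc by blast
  have e3: "2 * Suc k + 1 = Suc (2*k+2)" by simp
  have e4: "2 * Suc k + 2 = Suc (2 * Suc k + 1)" by simp
  have BS: "(\<Sum>w\<in>UNIV. B u w * S w v) = - (4^n) * S u v" for u v
  proof -
    have "(\<Sum>w\<in>UNIV. B u w * S w v) = 2^n * (\<Sum>w\<in>UNIV. Zm u w * S w v) - 4^n * (\<Sum>w\<in>UNIV. dl u w * S w v)"
      by (simp add: B_def algebra_simps sum_subtractf sum_distrib_left)
    thus ?thesis using E2 sum_dl[of u "\<lambda>w. S w v"] by simp
  qed
  have c3: "mat_pow M (2 * Suc k + 1) u v = \<tau>^(2 * Suc k + 1) * (-(4^n))^(Suc k) * S u v" for u v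
  proof -
    have "mat_pow M (2 * Suc k + 1) u v = (\<Sum>w\<in>UNIV. mat_pow M (2*k+2) u w * M w v)"
      unfolding e3 by (simp only: mat_pow.simps)
    also have "\<dots> = (\<Sum>w\<in>UNIV. (\<tau>^(2*k+2) * (-(4^n))^k * B u w) * (\<tau> * S w v))"
      by (simp only: Bk[unfolded M_def] M_def)
    also have "\<dots> = \<tau>^(2*k+2) * (-(4^n))^k * \<tau> * (\<Sum>w\<in>UNIV. B u w * S w v)"
      by (rule sum_factor)
    also have "\<dots> = \<tau>^(2 * Suc k + 1) * (-(4^n))^(Suc k) * S u v"
      by (simp add: BS)
    finally show ?thesis .
  qed
  have c4: "mat_pow M (2 * Suc k + 2) u v = \<tau>^(2 * Suc k + 2) * (-(4^n))^(Suc k) * B u v"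
  proof -
    have "mat_pow M (2 * Suc k + 2) u v = (\<Sum>w\<in>UNIV. mat_pow M (2 * Suc k + 1) u w * M w v)"
      unfolding e4 by (simp only: mat_pow.simps)
    also have "\<dots> = (\<Sum>w\<in>UNIV. (\<tau>^(2 * Suc k + 1) * (-(4^n))^(Suc k) * S u w) * (\<tau> * S w v))"
      by (simp only: c3[unfolded M_def] M_def)
    also have "\<dots> = \<tau>^(2 * Suc k + 1) * (-(4^n))^(Suc k) * \<tau> * (\<Sum>w\<in>UNIV. S u w * S w v)"
      by (rule sum_factor)
    also have "\<dots> = \<tau>^(2 * Suc k + 2) * (-(4^n))^(Suc k) * B u v"
      by (simp add: E1)
    finally show ?thesis .
  qed
  show ?case using c3 c4 by blast
qed

end

context suz
begin

lemma lam_sq: "((2::real)^n)^2 = 4^n"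
proof -
  have "((2::real)^n)^2 = 2^n * 2^n" by (simp add: power2_eq_square)
  also have "\<dots> = 4^n" by (simp flip: power_mult_distrib)
  finally show ?thesis .
qed

lemma term_formula:
  fixes \<tau> lam x :: real
  defines "M \<equiv> (\<lambda>u v. \<tau> * S u v)" and "lam \<equiv> (2::real)^n" and "x \<equiv> \<tau> * lam"
  shows "mat_pow M k u v / fact k =
           sin_coeff k * x^k * (S u v / lam) - cos_coeff k * x^k * (B u v / lam^2)
           + (if k = 0 then dl u v + B u v / lam^2 else 0)"
proof -
  have lam0: "lam \<noteq> 0" by (simp add: lam_def)
  have L2: "lam^2 = 4^n" unfolding lam_def by (rule lam_sq)
  have P: "lam^(2*j) = (4^n)^j" for j by (simp add: power_mult L2)
  have neg: "(-((4::real)^n))^j = (-1)^j * (4^n)^j" for j by (rule power_minus)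
  show ?thesis
  proof (cases "k = 0")
    case True thus ?thesis by (simp add: dl_def)
  next
    case False
    show ?thesis
    proof (cases "even k")
      case False
      then obtain j where k: "k = 2*j+1" by (metis oddE)
      have pf: "mat_pow M k u v = \<tau>^(2*j+1) * (-(4^n))^j * S u v"
        using pow_formula[of \<tau> j u v] k by (simp add: M_def)
      have sc: "sin_coeff k = (-1)^j / fact k" using k by (simp add: sin_coeff_def)
      have cc: "cos_coeff k = 0" using k by (simp add: cos_coeff_def)
      have xk: "x^k = \<tau>^(2*j+1) * (4^n)^j * lam"
        unfolding x_def k by (simp add: power_mult_distrib power_add P)
      show ?thesis unfolding pf sc cc xk neg using lam0 \<open>k \<noteq> 0\<close>
        by (simp add: field_simps power2_eq_square)
    next
      case True
      then obtain j where k: "k = 2*j+2" using \<open>k \<noteq> 0\<close>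
        by (metis evenE add_2_eq_Suc' mult_Suc_right not0_implies_Suc nat_mult_eq_cancel1 zero_less_numeral
            mult_0_right Suc_eq_plus1 add.commute)
      have pf: "mat_pow M k u v = \<tau>^(2*j+2) * (-(4^n))^j * B u v"
        using pow_formula[of \<tau> j u v] k by (simp add: M_def)
      have sc: "sin_coeff k = 0" using k by (simp add: sin_coeff_def)
      have cc: "cos_coeff k = - ((-1)^j / fact k)" using k by (simp add: cos_coeff_def)
      have xk: "x^k = \<tau>^(2*j+2) * (4^n)^j * lam^2"
        unfolding x_def k by (simp add: power_mult_distrib power_add P power2_eq_square)
      show ?thesis unfolding pf sc cc xk neg using lam0 \<open>k \<noteq> 0\<close>
        by (simp add: field_simps power2_eq_square)
    qed
  qed
qed

lemma exp_value:
  defines "M \<equiv> (\<lambda>u v. (pi / 2 ^ (n + 1)) * S u v)"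
  shows "mat_exp M u v = (S u v + Zm u v) / 2^n"
proof -
  define \<tau> :: real where "\<tau> = pi / 2 ^ (n + 1)"
  define lam :: real where "lam = 2^n"
  define x where "x = \<tau> * lam"
  have x: "x = pi / 2" by (simp add: x_def \<tau>_def lam_def)
  have lam0: "lam \<noteq> 0" by (simp add: lam_def)
  have tf: "mat_pow M k u v / fact k =
           sin_coeff k * x^k * (S u v / lam) - cos_coeff k * x^k * (B u v / lam^2)
           + (if k = 0 then dl u v + B u v / lam^2 else 0)" for k
    unfolding M_def x_def lam_def \<tau>_def by (rule term_formula)
  have s0: "(\<lambda>k. sin_coeff k * x^k) sums sin x" using sin_converges[of x] by simp
  have c0: "(\<lambda>k. cos_coeff k * x^k) sums cos x" using cos_converges[of x] by simp
  have s1: "(\<lambda>k. sin_coeff k * x^k * (S u v / lam)) sums (sin x * (S u v / lam))"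
    using sums_mult2[OF s0, of "S u v / lam"] .
  have s2: "(\<lambda>k. cos_coeff k * x^k * (B u v / lam^2)) sums (cos x * (B u v / lam^2))"
    using sums_mult2[OF c0, of "B u v / lam^2"] .
  have s3: "(\<lambda>k. if k = 0 then dl u v + B u v / lam^2 else 0) sums (dl u v + B u v / lam^2)"
    using sums_single[of 0 "\<lambda>_. dl u v + B u v / lam^2"] by simp
  have "(\<lambda>k. mat_pow M k u v / fact k) sums
          (sin x * (S u v / lam) - cos x * (B u v / lam^2) + (dl u v + B u v / lam^2))"
    unfolding tf by (intro sums_add sums_diff s1 s2 s3)
  hence "mat_exp M u v = sin x * (S u v / lam) - cos x * (B u v / lam^2) + (dl u v + B u v / lam^2)"
    unfolding mat_exp_def by (simp add: sums_iff)
  also have "\<dots> = S u v / lam + dl u v + B u v / lam^2" by (simp add: x)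
  also have "\<dots> = (S u v + Zm u v) / 2^n"
  proof -
    have L2: "lam^2 = 4^n" unfolding lam_def by (rule lam_sq)
    have "B u v = lam * Zm u v - lam^2 * dl u v" by (simp add: B_def lam_sq lam_def)
    thus ?thesis using lam0 by (simp add: field_simps power2_eq_square lam_def)
  qed
  finally show ?thesis .
qed

lemma abs_SZ: "\<bar>S u v + Zm u v\<bar> = 1"
proof (cases "fst u = fst v")
  case True
  obtain a b where u: "u = (a, b)" by fastforce
  obtain c d where v: "v = (c, d)" by fastforce
  have "a = c" using True u v by simp
  hence "S u v = 0" using u v by (simp add: S_def sg0)
  thus ?thesis using True by (simp add: Zm_def)
next
  case False
  obtain a b where u: "u = (a, b)" by fastforce
  obtain c d where v: "v = (c, d)" by fastforce
  have "c + a \<noteq> 0" using False u v eq_iff_sum0[of c a] by auto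
  hence "\<bar>S u v\<bar> = 1" using u v by (simp add: S_def sg_abs)
  thus ?thesis using False by (simp add: Zm_def)
qed

end

theorem mainTheorem1:
  fixes \<theta> :: "'a::{field,finite} \<Rightarrow> 'a"
    and n m :: nat
    and C :: "('a \<times> 'a) set"
  assumes n_def: "n = 2 * m + 1" and n_ge: "n \<ge> 3"
    and card_F: "card (UNIV :: 'a set) = 2 ^ n"
    and char2: "(1::'a) + 1 = 0"
    and aut_bij: "bij \<theta>"
    and aut_add: "\<And>x y. \<theta> (x + y) = \<theta> x + \<theta> y"
    and aut_mult: "\<And>x y. \<theta> (x * y) = \<theta> x * \<theta> y"
    and gen_n: "\<theta> ^^ n = id"
    and gen_min: "\<And>k. 0 < k \<Longrightarrow> k < n \<Longrightarrow> \<theta> ^^ k \<noteq> id"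
    and C_union: "\<forall>g\<in>C. Aord \<theta> g = 4 \<and> Aconjcl \<theta> g \<subseteq> C"
    and C_choice: "\<forall>K\<in>Aclasses4 \<theta>. (K \<subseteq> C) \<longleftrightarrow> \<not> (Ainv \<theta> ` K \<subseteq> C)"
  shows "uniform_mixing
           (mat_exp (\<lambda>u v. (pi / 2 ^ (n + 1)) * skew_adj (Amul \<theta>) C u v))"
proof -
  interpret suz \<theta> n m C
    by unfold_locales (use assms in auto)
  have "(\<lambda>u v. (pi / 2 ^ (n + 1)) * skew_adj (Amul \<theta>) C u v) = (\<lambda>u v. (pi / 2 ^ (n + 1)) * S u v)"
    by (simp add: skew_eq)
  hence "mat_exp (\<lambda>u v. (pi / 2 ^ (n + 1)) * skew_adj (Amul \<theta>) C u v) = (\<lambda>u v. (S u v + Zm u v) / 2^n)"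
    using exp_value by (auto intro!: ext)
  moreover have "\<forall>u v. \<bar>(S u v + Zm u v) / 2^n\<bar> = 1 / (2::real)^n"
    using abs_SZ by simp
  ultimately show ?thesis unfolding uniform_mixing_def by auto
qed

end
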